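(* Let $X\in\mathbb{R}^{m\times n}$ be fixed, $V=\frac1nXX^\top$, $W^K,W^Q\in\mathbb{R}^{n\times n_k}$ and $W\in\mathbb{R}^{n\times n}$ independent with i.i.d. $\mathcal N(0,1)$ entries, $Y=\frac1nXW^KW^{Q,\top}X^\top$, $\tau>0$, $A=I+\mathrm{Softmax}(\tau^{-1}Y)-\frac1m\mathbf 1\mathbf 1^\top$ (Softmax row-wise), and $$\mathcal T_2^{\alpha\beta}=\frac1{n\sqrt n}\big(AXWW^\top X^\top A^\top\big)^{\alpha\beta}.$$ Then $$\mathbb{E}[\mathcal T_2^{\alpha\beta}]=\sqrt n\sum_{\nu,\kappa}V^{\nu\kappa}\,\mathbb{E}[A^{\alpha\nu}A^{\beta\kappa}],$$ $$\mathbb{E}[\mathcal T_2^{\alpha\beta}\mathcal T_2^{\delta\omega}]=\sum_{\nu,\kappa,\nu',\kappa'}\mathbb{E}[A^{\alpha\nu}A^{\beta\kappa}A^{\delta\nu'}A^{\omega\kappa'}]\big(nV^{\nu\kappa}V^{\nu'\kappa'}+V^{\nu\nu'}V^{\kappa\kappa'}+V^{\nu\kappa'}V^{\nu'\kappa}\big).$$ *)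

theory Defs
  imports "HOL-Probability.Probability"
begin

text \<open>Matrices are functions nat => nat => real; only indices below the stated
 dimensions are used. X is m x n; WK, WQ are n x nk; W is n x n.\<close>

definition Vmat :: "nat \<Rightarrow> (nat \<Rightarrow> nat \<Rightarrow> real) \<Rightarrow> nat \<Rightarrow> nat \<Rightarrow> real" where
  "Vmat n X a b = (1 / real n) * (\<Sum>i<n. X a i * X b i)"

definition Ymat :: "nat \<Rightarrow> nat \<Rightarrow> (nat \<Rightarrow> nat \<Rightarrow> real) \<Rightarrow> (nat \<Rightarrow> nat \<Rightarrow> real)
    \<Rightarrow> (nat \<Rightarrow> nat \<Rightarrow> real) \<Rightarrow> nat \<Rightarrow> nat \<Rightarrow> real" where
  "Ymat n nk X WK WQ a b =
     (1 / real n) * (\<Sum>i<n. \<Sum>j<n. \<Sum>k<nk. X a i * WK i k * WQ j k * X b j)"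

definition softmax_rows :: "nat \<Rightarrow> (nat \<Rightarrow> nat \<Rightarrow> real) \<Rightarrow> nat \<Rightarrow> nat \<Rightarrow> real" where
  "softmax_rows m Z a b = exp (Z a b) / (\<Sum>g<m. exp (Z a g))"

definition Amat :: "nat \<Rightarrow> nat \<Rightarrow> nat \<Rightarrow> real \<Rightarrow> (nat \<Rightarrow> nat \<Rightarrow> real) \<Rightarrow> (nat \<Rightarrow> nat \<Rightarrow> real)
    \<Rightarrow> (nat \<Rightarrow> nat \<Rightarrow> real) \<Rightarrow> nat \<Rightarrow> nat \<Rightarrow> real" where
  "Amat m n nk \<tau> X WK WQ a b =
     (if a = b then 1 else 0) + softmax_rows m (\<lambda>c d. Ymat n nk X WK WQ c d / \<tau>) a b - 1 / real m"

definition T2 :: "nat \<Rightarrow> nat \<Rightarrow> nat \<Rightarrow> real \<Rightarrow> (nat \<Rightarrow> nat \<Rightarrow> real) \<Rightarrow> (nat \<Rightarrow> nat \<Rightarrow> real)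
    \<Rightarrow> (nat \<Rightarrow> nat \<Rightarrow> real) \<Rightarrow> (nat \<Rightarrow> nat \<Rightarrow> real) \<Rightarrow> nat \<Rightarrow> nat \<Rightarrow> real" where
  "T2 m n nk \<tau> X WK WQ W a b =
     (1 / (real n * sqrt (real n))) *
     (\<Sum>\<nu><m. \<Sum>\<kappa><m. \<Sum>i<n. \<Sum>l<n. \<Sum>j<n.
        Amat m n nk \<tau> X WK WQ a \<nu> * X \<nu> i * W i j * W l j * X \<kappa> l
        * Amat m n nk \<tau> X WK WQ b \<kappa>)"

text \<open>All Gaussian entries as one family, labelled (c,i,j):
 c = 0 for W^K, c = 1 for W^Q, c = 2 for W.\<close>
definition gauss_entry :: "('a \<Rightarrow> nat \<Rightarrow> nat \<Rightarrow> real) \<Rightarrow> ('a \<Rightarrow> nat \<Rightarrow> nat \<Rightarrow> real)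
    \<Rightarrow> ('a \<Rightarrow> nat \<Rightarrow> nat \<Rightarrow> real) \<Rightarrow> nat \<times> nat \<times> nat \<Rightarrow> 'a \<Rightarrow> real" where
  "gauss_entry WK WQ W = (\<lambda>(c, i, j) \<omega>.
     if c = 0 then WK \<omega> i j else if c = 1 then WQ \<omega> i j else W \<omega> i j)"

definition gauss_index :: "nat \<Rightarrow> nat \<Rightarrow> (nat \<times> nat \<times> nat) set" where
  "gauss_index n nk = ({0::nat} \<times> {..<n} \<times> {..<nk}) \<union> ({1} \<times> {..<n} \<times> {..<nk})
      \<union> ({2} \<times> {..<n} \<times> {..<n})"

end

theory Submission
  imports Defs
begin


lemma std_moment:
  assumes D: "distributed M lborel Z (\<lambda>x. ennreal (std_normal_density x))"
  shows "integrable M (\<lambda>s. Z s ^ k)"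
    and "(\<integral>s. Z s ^ k \<partial>M) = (\<integral>x. std_normal_density x * x ^ k \<partial>lborel)"
proof -
  have "integrable lborel (\<lambda>x. std_normal_density x * x ^ k)"
    by (rule integrable_std_normal_moment)
  then show "integrable M (\<lambda>s. Z s ^ k)"
    using distributed_integrable[OF D, of "\<lambda>x. x ^ k"] by simp
  show "(\<integral>s. Z s ^ k \<partial>M) = (\<integral>x. std_normal_density x * x ^ k \<partial>lborel)"
    using distributed_integral[OF D, of "\<lambda>x. x ^ k"] by simp
qed

lemma std_moment_vals:
  "(\<integral>x. std_normal_density x * x ^ 0 \<partial>lborel) = 1"
  "(\<integral>x. std_normal_density x * x ^ 1 \<partial>lborel) = 0"
  "(\<integral>x. std_normal_density x * x ^ 2 \<partial>lborel) = 1"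
  "(\<integral>x. std_normal_density x * x ^ 3 \<partial>lborel) = 0"
  "(\<integral>x. std_normal_density x * x ^ 4 \<partial>lborel) = 3"
  using integral_std_normal_moment_even[of 0] integral_std_normal_moment_even[of 1]
    integral_std_normal_moment_even[of 2]
    integral_std_normal_moment_odd[of 0] integral_std_normal_moment_odd[of 1]
  by (simp_all add: fact_numeral)



lemma prod_list_map_eq_prod_count:
  "prod_list (map f xs) = prod (\<lambda>x. f x ^ count_list xs x) (set xs)"
proof(induction xs)
  case (Cons x xs)
  show ?case (is "?l = ?r")
  proof cases
    assume "x \<in> set xs"
    have "?l = f x * (\<Prod>x\<in>set xs. f x ^ count_list xs x)" by (simp add: Cons.IH)
    also have "set xs = insert x (set xs - {x})" using \<open>x \<in> set xs\<close>by blast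
    also have "f x * (\<Prod>x\<in>insert x (set xs - {x}). f x ^ count_list xs x) = ?r"
      by (simp add: prod.insert_remove eq_commute mult.assoc)
    finally show ?thesis .
  next
    assume "x \<notin> set xs"
    hence "\<And>xa. xa \<in> set xs \<Longrightarrow> x \<noteq> xa" by blast
    thus ?thesis by (simp add: Cons.IH \<open>x \<notin> set xs\<close>)
  qed
qed simp

definition mom :: "nat \<Rightarrow> real" where
  "mom k = (\<integral>x. std_normal_density x * x ^ k \<partial>lborel)"

lemma indep_prod_moment:
  assumes P: "prob_space M" and ind: "prob_space.indep_vars M (\<lambda>_. borel) Z I"
    and D: "\<And>e. e\<in>I \<Longrightarrow> distributed M lborel (Z e) (\<lambda>x. ennreal (std_normal_density x))"
    and sub: "set es \<subseteq> I"
  shows "integrable M (\<lambda>s. prod_list (map (\<lambda>e. Z e s) es))"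
   and "(\<integral>s. prod_list (map (\<lambda>e. Z e s) es) \<partial>M) = (\<Prod>e\<in>set es. mom (count_list es e))"
proof -
  interpret prob_space M by fact
  have ind2: "indep_vars (\<lambda>_. borel) (\<lambda>e s. Z e s ^ count_list es e) (set es)"
    by (rule indep_vars_compose2[where M'="\<lambda>_. borel", OF indep_vars_subset[OF ind sub]]) auto
  have int: "\<And>e. e \<in> set es \<Longrightarrow> integrable M (\<lambda>s. Z e s ^ count_list es e)"
    using std_moment(1)[OF D] sub by auto
  have eq: "(\<lambda>s. prod_list (map (\<lambda>e. Z e s) es)) = (\<lambda>s. \<Prod>e\<in>set es. Z e s ^ count_list es e)"
    by (simp add: prod_list_map_eq_prod_count)
  show "integrable M (\<lambda>s. prod_list (map (\<lambda>e. Z e s) es))"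
    unfolding eq by (rule indep_vars_integrable[OF _ ind2 int]) auto
  show "(\<integral>s. prod_list (map (\<lambda>e. Z e s) es) \<partial>M) = (\<Prod>e\<in>set es. mom (count_list es e))"
    unfolding eq  apply (subst indep_vars_lebesgue_integral[OF _ ind2 int])
    using std_moment(2)[OF D] sub by (auto simp: mom_def intro!: prod.cong)
qed

lemma mom_vals: "mom 0 = 1" "mom (Suc 0) = 0" "mom (Suc (Suc 0)) = 1" "mom (Suc (Suc (Suc 0))) = 0" "mom (Suc (Suc (Suc (Suc 0)))) = 3"
  unfolding mom_def using std_moment_vals by (simp_all add: numeral_eq_Suc)

lemma moment2:
  assumes P: "prob_space M" and ind: "prob_space.indep_vars M (\<lambda>_. borel) Z I"
    and D: "\<And>e. e\<in>I \<Longrightarrow> distributed M lborel (Z e) (\<lambda>x. ennreal (std_normal_density x))"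
    and "a \<in> I" "b \<in> I"
  shows "integrable M (\<lambda>s. Z a s * Z b s)"
   and "(\<integral>s. Z a s * Z b s \<partial>M) = (if a = b then 1 else 0)"
  using indep_prod_moment[OF P ind D, of "[a,b]"] assms(4,5)
  by (auto simp: mom_vals)

lemma moment4:
  assumes P: "prob_space M" and ind: "prob_space.indep_vars M (\<lambda>_. borel) Z I"
    and D: "\<And>e. e\<in>I \<Longrightarrow> distributed M lborel (Z e) (\<lambda>x. ennreal (std_normal_density x))"
    and "a \<in> I" "b \<in> I" "c \<in> I" "d \<in> I"
  shows "integrable M (\<lambda>s. Z a s * Z b s * Z c s * Z d s)"
   and "(\<integral>s. Z a s * Z b s * Z c s * Z d s \<partial>M) =
      (if a = b \<and> c = d then 1 else 0) + (if a = c \<and> b = d then 1 else 0) + (if a = d \<and> b = c then 1 else 0)"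
proof -
  have e: "(\<lambda>s. Z a s * Z b s * Z c s * Z d s) = (\<lambda>s. prod_list (map (\<lambda>e. Z e s) [a,b,c,d]))"
    by (simp add: mult.assoc)
  show "integrable M (\<lambda>s. Z a s * Z b s * Z c s * Z d s)"
    unfolding e using indep_prod_moment(1)[OF P ind D, of "[a,b,c,d]"] assms(4-7) by auto
  show "(\<integral>s. Z a s * Z b s * Z c s * Z d s \<partial>M) =
      (if a = b \<and> c = d then 1 else 0) + (if a = c \<and> b = d then 1 else 0) + (if a = d \<and> b = c then 1 else 0)"
    unfolding e using indep_prod_moment(2)[OF P ind D, of "[a,b,c,d]"] assms(4-7)
    by (cases "a = b"; cases "a = c"; cases "a = d"; cases "b = c"; cases "b = d"; cases "c = d")
       (auto simp: mom_vals insert_commute)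
qed



lemma delta_r: "(a::real) * (if P then 1 else 0) = (if P then a else 0)" by simp
lemma mif0: "(a::real) * (if P then b else 0) = (if P then a * b else 0)" by simp
lemma mif0': "(if P then b else 0) * (a::real) = (if P then b * a else 0)" by simp
lemma sif: "(\<Sum>x\<in>A. if P then f x else (0::real)) = (if P then (\<Sum>x\<in>A. f x) else 0)" by simp

lemma det_a:
  fixes X :: "nat \<Rightarrow> nat \<Rightarrow> real"
  shows "(\<Sum>i<n. \<Sum>l<n. \<Sum>j<n. \<Sum>i'<n. \<Sum>l'<n. \<Sum>j'<n. X a i * X b l * X c i' * X d l' *
     (if i = l then if i' = l' then 1 else 0 else 0)) =
     real n * real n * (\<Sum>i<n. X a i * X b i) * (\<Sum>i<n. X c i * X d i)"
  by (simp add: delta_r mif0 mif0' sif sum.delta sum.delta' sum_distrib_left sum_distrib_right cong: if_cong) (subst sum.swap, simp add: mult_ac)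

lemma det_b:
  fixes X :: "nat \<Rightarrow> nat \<Rightarrow> real"
  shows "(\<Sum>i<n. \<Sum>l<n. \<Sum>j<n. \<Sum>i'<n. \<Sum>l'<n. \<Sum>j'<n. X a i * X b l * X c i' * X d l' *
     (if i = i' then if l = l' then if j = j' then 1 else 0 else 0 else 0)) =
     real n * (\<Sum>i<n. X a i * X c i) * (\<Sum>i<n. X b i * X d i)"
  by (simp add: delta_r mif0 mif0' sif sum.delta sum.delta' sum_distrib_left sum_distrib_right cong: if_cong) (subst sum.swap, simp add: mult_ac)

lemma det_c:
  fixes X :: "nat \<Rightarrow> nat \<Rightarrow> real"
  shows "(\<Sum>i<n. \<Sum>l<n. \<Sum>j<n. \<Sum>i'<n. \<Sum>l'<n. \<Sum>j'<n. X a i * X b l * X c i' * X d l' *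
     (if l = i' then if i = l' then if j = j' then 1 else 0 else 0 else 0)) =
     real n * (\<Sum>i<n. X a i * X d i) * (\<Sum>i<n. X b i * X c i)"
  by (simp add: delta_r mif0 mif0' sif sum.delta sum.delta' sum_distrib_left sum_distrib_right cong: if_cong) (subst sum.swap, simp add: mult_ac)

lemma integral_sum1:
  fixes f :: "nat \<Rightarrow> 's \<Rightarrow> real"
  assumes "\<And>i. i < n \<Longrightarrow> integrable M (f i)"
  shows "(\<integral>s. (\<Sum>i<n. f i s) \<partial>M) = (\<Sum>i<n. \<integral>s. f i s \<partial>M)"
  using assms by (subst Bochner_Integration.integral_sum) auto

lemma integrable_sum1:
  fixes f :: "nat \<Rightarrow> 's \<Rightarrow> real"
  assumes "\<And>i. i < n \<Longrightarrow> integrable M (f i)"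
  shows "integrable M (\<lambda>s. \<Sum>i<n. f i s)"
  using assms by (intro Bochner_Integration.integrable_sum) auto

lemma integral_sum3:
  fixes f :: "nat \<Rightarrow> nat \<Rightarrow> nat \<Rightarrow> 's \<Rightarrow> real"
  assumes "\<And>i l j. i < n \<Longrightarrow> l < n \<Longrightarrow> j < n \<Longrightarrow> integrable M (f i l j)"
  shows "(\<integral>s. (\<Sum>i<n. \<Sum>l<n. \<Sum>j<n. f i l j s) \<partial>M) = (\<Sum>i<n. \<Sum>l<n. \<Sum>j<n. \<integral>s. f i l j s \<partial>M)"
  using assms by (simp add: integral_sum1 integrable_sum1)

lemma integral_sum6:
  fixes f :: "nat \<Rightarrow> nat \<Rightarrow> nat \<Rightarrow> nat \<Rightarrow> nat \<Rightarrow> nat \<Rightarrow> 's \<Rightarrow> real"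
  assumes "\<And>i l j i' l' j'. i < n \<Longrightarrow> l < n \<Longrightarrow> j < n \<Longrightarrow> i' < n \<Longrightarrow> l' < n \<Longrightarrow> j' < n \<Longrightarrow> integrable M (f i l j i' l' j')"
  shows "(\<integral>s. (\<Sum>i<n. \<Sum>l<n. \<Sum>j<n. \<Sum>i'<n. \<Sum>l'<n. \<Sum>j'<n. f i l j i' l' j' s) \<partial>M) =
     (\<Sum>i<n. \<Sum>l<n. \<Sum>j<n. \<Sum>i'<n. \<Sum>l'<n. \<Sum>j'<n. \<integral>s. f i l j i' l' j' s \<partial>M)"
  using assms by (simp add: integral_sum1 integrable_sum1)


definition Qf :: "nat \<Rightarrow> (nat \<Rightarrow> nat \<Rightarrow> real) \<Rightarrow> (nat \<Rightarrow> nat \<Rightarrow> real) \<Rightarrow> nat \<Rightarrow> nat \<Rightarrow> real" where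
  "Qf n X Wm a b = (\<Sum>i<n. \<Sum>l<n. \<Sum>j<n. X a i * X b l * (Wm i j * Wm l j))"

lemma gauss_W: "gauss_entry WK WQ W (2, i, j) s = W s i j"
  by (simp add: gauss_entry_def)

lemma gauss_W_idx: "i < n \<Longrightarrow> j < n \<Longrightarrow> (2, i, j) \<in> gauss_index n nk"
  by (simp add: gauss_index_def)

context
  fixes M :: "'s measure" and WK WQ W :: "'s \<Rightarrow> nat \<Rightarrow> nat \<Rightarrow> real" and n nk :: nat
  assumes P: "prob_space M"
    and ind: "prob_space.indep_vars M (\<lambda>_. borel) (gauss_entry WK WQ W) (gauss_index n nk)"
    and D: "\<And>e. e \<in> gauss_index n nk \<Longrightarrow>
           distributed M lborel (gauss_entry WK WQ W e) (\<lambda>x. ennreal (std_normal_density x))"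
begin

lemma W2:
  assumes "i < n" "j < n" "l < n" "j' < n"
  shows "integrable M (\<lambda>s. W s i j * W s l j')"
    and "(\<integral>s. W s i j * W s l j' \<partial>M) = (if i = l \<and> j = j' then 1 else 0)"
  using moment2[OF P ind D, of "(2,i,j)" "(2,l,j')"] gauss_W_idx[of i n j nk] gauss_W_idx[of l n j' nk] assms
  by (auto simp: gauss_entry_def)

lemma W4:
  assumes "i < n" "j < n" "l < n" "i' < n" "j' < n" "l' < n"
  shows "integrable M (\<lambda>s. W s i j * W s l j * W s i' j' * W s l' j')"
    and "(\<integral>s. W s i j * W s l j * W s i' j' * W s l' j' \<partial>M) =
      (if i = l then if i' = l' then 1 else 0 else 0)
    + (if i = i' then if l = l' then if j = j' then 1 else 0 else 0 else 0)
    + (if l = i' then if i = l' then if j = j' then 1 else 0 else 0 else 0)"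
  using moment4[OF P ind D, of "(2,i,j)" "(2,l,j)" "(2,i',j')" "(2,l',j')"]
    gauss_W_idx[of i n j nk] gauss_W_idx[of l n j nk] gauss_W_idx[of i' n j' nk] gauss_W_idx[of l' n j' nk] assms
  by (auto simp: gauss_entry_def)

lemma EQ:
  shows "integrable M (\<lambda>s. Qf n X (W s) a b)"
    and "(\<integral>s. Qf n X (W s) a b \<partial>M) = real n * (\<Sum>i<n. X a i * X b i)"
proof -
  show "integrable M (\<lambda>s. Qf n X (W s) a b)"
    unfolding Qf_def by (auto intro!: Bochner_Integration.integrable_sum integrable_mult_right W2)
  have "(\<integral>s. Qf n X (W s) a b \<partial>M) = (\<Sum>i<n. \<Sum>l<n. \<Sum>j<n. X a i * X b l * (if i = l then 1 else 0))"
    unfolding Qf_def by (subst integral_sum3) (auto simp: W2)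
  also have "\<dots> = real n * (\<Sum>i<n. X a i * X b i)"
    by (simp add: delta_r mif0 mif0' sif sum.delta sum.delta' sum_distrib_left sum_distrib_right cong: if_cong)
  finally show "(\<integral>s. Qf n X (W s) a b \<partial>M) = real n * (\<Sum>i<n. X a i * X b i)" .
qed

lemma QQ_expand: "Qf n X Wm a b * Qf n X Wm c d =
  (\<Sum>i<n. \<Sum>l<n. \<Sum>j<n. \<Sum>i'<n. \<Sum>l'<n. \<Sum>j'<n. X a i * X b l * X c i' * X d l' *
     (Wm i j * Wm l j * Wm i' j' * Wm l' j'))"
  unfolding Qf_def sum_distrib_right unfolding sum_distrib_left by (intro sum.cong refl) (simp only: mult_ac)

lemma EQQ:
  shows "integrable M (\<lambda>s. Qf n X (W s) a b * Qf n X (W s) c d)"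
    and "(\<integral>s. Qf n X (W s) a b * Qf n X (W s) c d \<partial>M) =
     real n * real n * (\<Sum>i<n. X a i * X b i) * (\<Sum>i<n. X c i * X d i)
   + real n * (\<Sum>i<n. X a i * X c i) * (\<Sum>i<n. X b i * X d i)
   + real n * (\<Sum>i<n. X a i * X d i) * (\<Sum>i<n. X b i * X c i)"
proof -
  show "integrable M (\<lambda>s. Qf n X (W s) a b * Qf n X (W s) c d)"
    unfolding QQ_expand by (auto intro!: Bochner_Integration.integrable_sum integrable_mult_right W4)
  have "(\<integral>s. Qf n X (W s) a b * Qf n X (W s) c d \<partial>M) =
    (\<Sum>i<n. \<Sum>l<n. \<Sum>j<n. \<Sum>i'<n. \<Sum>l'<n. \<Sum>j'<n. X a i * X b l * X c i' * X d l' *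
     ((if i = l then if i' = l' then 1 else 0 else 0)
    + (if i = i' then if l = l' then if j = j' then 1 else 0 else 0 else 0)
    + (if l = i' then if i = l' then if j = j' then 1 else 0 else 0 else 0)))"
    unfolding QQ_expand by (subst integral_sum6) (auto simp: W4 simp del: One_nat_def intro!: sum.cong)
  also have "\<dots> = real n * real n * (\<Sum>i<n. X a i * X b i) * (\<Sum>i<n. X c i * X d i)
   + real n * (\<Sum>i<n. X a i * X c i) * (\<Sum>i<n. X b i * X d i)
   + real n * (\<Sum>i<n. X a i * X d i) * (\<Sum>i<n. X b i * X c i)"
    unfolding distrib_left sum.distrib det_a det_b det_c ..
  finally show "(\<integral>s. Qf n X (W s) a b * Qf n X (W s) c d \<partial>M) =
     real n * real n * (\<Sum>i<n. X a i * X b i) * (\<Sum>i<n. X c i * X d i)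
   + real n * (\<Sum>i<n. X a i * X c i) * (\<Sum>i<n. X b i * X d i)
   + real n * (\<Sum>i<n. X a i * X d i) * (\<Sum>i<n. X b i * X c i)" .
qed

end


definition KK :: "nat \<Rightarrow> nat \<Rightarrow> (nat \<times> nat \<times> nat) set" where
  "KK n nk = ({0::nat} \<times> {..<n} \<times> {..<nk}) \<union> ({1} \<times> {..<n} \<times> {..<nk})"

lemma meas_Y[measurable]:
  "(\<lambda>x. Ymat n nk X (\<lambda>i k. x (0,i,k)) (\<lambda>i k. x (1,i,k)) a b) \<in> borel_measurable (PiM (KK n nk) (\<lambda>_. borel))"
  unfolding Ymat_def
  by (intro borel_measurable_times borel_measurable_sum measurable_const borel_measurable_const
       measurable_component_singleton) (auto simp: KK_def)

lemma meas_FA[measurable]: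
  "(\<lambda>x. Amat m n nk \<tau> X (\<lambda>i k. x (0,i,k)) (\<lambda>i k. x (1,i,k)) a b) \<in> borel_measurable (PiM (KK n nk) (\<lambda>_. borel))"
  unfolding Amat_def softmax_rows_def
  by measurable


definition LL :: "nat \<Rightarrow> (nat \<times> nat \<times> nat) set" where
  "LL n = {2::nat} \<times> {..<n} \<times> {..<n}"

lemma meas_Q[measurable]:
  "(\<lambda>y. Qf n X (\<lambda>i j. y (2,i,j)) a b) \<in> borel_measurable (PiM (LL n) (\<lambda>_. borel))"
  unfolding Qf_def
  by (intro borel_measurable_times borel_measurable_sum measurable_const borel_measurable_const
       measurable_component_singleton) (auto simp: LL_def)

lemma Amat_cong:
  assumes "\<And>i k. i < n \<Longrightarrow> k < nk \<Longrightarrow> WK i k = WK' i k"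
    and "\<And>i k. i < n \<Longrightarrow> k < nk \<Longrightarrow> WQ i k = WQ' i k"
  shows "Amat m n nk \<tau> X WK WQ = Amat m n nk \<tau> X WK' WQ'"
proof -
  have "Ymat n nk X WK WQ = Ymat n nk X WK' WQ'"
    using assms by (auto simp: fun_eq_iff Ymat_def intro!: sum.cong arg_cong[where f="\<lambda>x. _ * x"])
  then show ?thesis by (simp add: fun_eq_iff Amat_def)
qed

lemma Qf_cong:
  assumes "\<And>i j. i < n \<Longrightarrow> j < n \<Longrightarrow> Wm i j = Wm' i j"
  shows "Qf n X Wm = Qf n X Wm'"
  using assms by (auto simp: fun_eq_iff Qf_def intro!: sum.cong)

lemma bound3: "0 \<le> S \<Longrightarrow> S \<le> 1 \<Longrightarrow> 0 \<le> t \<Longrightarrow> t \<le> 1 \<Longrightarrow> \<bar>(if P then 1 else 0) + S - t\<bar> \<le> (3::real)"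
  by (auto simp: abs_le_iff)

lemma Amat_bound:
  assumes "b < m" "m > 0"
  shows "\<bar>Amat m n nk \<tau> X WK WQ a b\<bar> \<le> 3"
proof -
  let ?Z = "\<lambda>c d. Ymat n nk X WK WQ c d / \<tau>"
  have pos: "0 < (\<Sum>g<m. exp (?Z a g))" using assms by (intro sum_pos) auto
  have le: "exp (?Z a b) \<le> (\<Sum>g<m. exp (?Z a g))"
    using assms by (intro member_le_sum) auto
  have s0: "0 \<le> softmax_rows m ?Z a b" unfolding softmax_rows_def using pos by simp
  have s1: "softmax_rows m ?Z a b \<le> 1" unfolding softmax_rows_def using pos le by simp
  have "0 \<le> 1 / real m" "1 / real m \<le> 1" using assms by auto
  then show ?thesis unfolding Amat_def using s0 s1 by (intro bound3)
qed

lemma integral_sum2: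
  fixes f :: "nat \<Rightarrow> nat \<Rightarrow> 's \<Rightarrow> real"
  assumes "\<And>i l. i < m \<Longrightarrow> l < m \<Longrightarrow> integrable M (f i l)"
  shows "(\<integral>s. (\<Sum>i<m. \<Sum>l<m. f i l s) \<partial>M) = (\<Sum>i<m. \<Sum>l<m. \<integral>s. f i l s \<partial>M)"
  using assms by (simp add: integral_sum1 integrable_sum1)

lemma integral_sum4:
  fixes f :: "nat \<Rightarrow> nat \<Rightarrow> nat \<Rightarrow> nat \<Rightarrow> 's \<Rightarrow> real"
  assumes "\<And>i l j k. i < m \<Longrightarrow> l < m \<Longrightarrow> j < m \<Longrightarrow> k < m \<Longrightarrow> integrable M (f i l j k)"
  shows "(\<integral>s. (\<Sum>i<m. \<Sum>l<m. \<Sum>j<m. \<Sum>k<m. f i l j k s) \<partial>M) = (\<Sum>i<m. \<Sum>l<m. \<Sum>j<m. \<Sum>k<m. \<integral>s. f i l j k s \<partial>M)"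
  using assms by (simp add: integral_sum1 integrable_sum1)

lemma sqrt_sq_n: "sqrt (real n) * sqrt (real n) = real n" by simp

theorem lemmaC7:
  fixes M :: "'s measure"
    and X :: "nat \<Rightarrow> nat \<Rightarrow> real"
    and WK WQ W :: "'s \<Rightarrow> nat \<Rightarrow> nat \<Rightarrow> real"
    and m n nk :: nat and \<tau> :: real
    and \<alpha> \<beta> \<delta> \<omega> :: nat
  assumes "prob_space M"
    and "m > 0" and "n > 0" and "\<tau> > 0"
    and "prob_space.indep_vars M (\<lambda>_. borel) (gauss_entry WK WQ W) (gauss_index n nk)"
    and "\<And>e. e \<in> gauss_index n nk \<Longrightarrow>
           distributed M lborel (gauss_entry WK WQ W e) (\<lambda>x. ennreal (std_normal_density x))"
    and "\<alpha> < m" and "\<beta> < m" and "\<delta> < m" and "\<omega> < m"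
  shows "((\<integral>s. T2 m n nk \<tau> X (WK s) (WQ s) (W s) \<alpha> \<beta> \<partial>M)
           = sqrt (real n) * (\<Sum>\<nu><m. \<Sum>\<kappa><m. Vmat n X \<nu> \<kappa> *
               (\<integral>s. Amat m n nk \<tau> X (WK s) (WQ s) \<alpha> \<nu> * Amat m n nk \<tau> X (WK s) (WQ s) \<beta> \<kappa> \<partial>M)))
         \<and> ((\<integral>s. T2 m n nk \<tau> X (WK s) (WQ s) (W s) \<alpha> \<beta> * T2 m n nk \<tau> X (WK s) (WQ s) (W s) \<delta> \<omega> \<partial>M)
           = (\<Sum>\<nu><m. \<Sum>\<kappa><m. \<Sum>\<nu>'<m. \<Sum>\<kappa>'<m.
               (\<integral>s. Amat m n nk \<tau> X (WK s) (WQ s) \<alpha> \<nu> * Amat m n nk \<tau> X (WK s) (WQ s) \<beta> \<kappa>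
                   * Amat m n nk \<tau> X (WK s) (WQ s) \<delta> \<nu>' * Amat m n nk \<tau> X (WK s) (WQ s) \<omega> \<kappa>' \<partial>M)
               * (real n * Vmat n X \<nu> \<kappa> * Vmat n X \<nu>' \<kappa>'
                  + Vmat n X \<nu> \<nu>' * Vmat n X \<kappa> \<kappa>' + Vmat n X \<nu> \<kappa>' * Vmat n X \<nu>' \<kappa>)))"
proof -
  note P = assms(1) and ind = assms(5) and D = assms(6)
  interpret prob_space M by fact
  define K where "K = KK n nk"
  define L where "L = LL n"
  define RK where "RK = (\<lambda>s. restrict (\<lambda>e. gauss_entry WK WQ W e s) K)"
  define RL where "RL = (\<lambda>s. restrict (\<lambda>e. gauss_entry WK WQ W e s) L)"
  have indKL: "indep_var (PiM K (\<lambda>_. borel)) RK (PiM L (\<lambda>_. borel)) RL"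
    unfolding RK_def RL_def
    by (rule indep_var_restrict[OF ind]) (auto simp: K_def L_def KK_def LL_def gauss_index_def)
  have fact: "integrable M (\<lambda>s. F (RK s) * G (RL s)) \<and>
      (\<integral>s. F (RK s) * G (RL s) \<partial>M) = (\<integral>s. F (RK s) \<partial>M) * (\<integral>s. G (RL s) \<partial>M)"
    if F: "F \<in> borel_measurable (PiM K (\<lambda>_. borel))" and Fb: "\<And>x. \<bar>F x\<bar> \<le> B"
      and G: "G \<in> borel_measurable (PiM L (\<lambda>_. borel))" and Gi: "integrable M (\<lambda>s. G (RL s))"
    for F G :: "(nat \<times> nat \<times> nat \<Rightarrow> real) \<Rightarrow> real" and B
  proof -
    have iv: "indep_var borel (F \<circ> RK) borel (G \<circ> RL)"
      by (rule indep_var_compose[OF indKL F G])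
    have rv: "random_variable borel (F \<circ> RK)" using indep_var_rv1[OF iv] .
    have intF: "integrable M (F \<circ> RK)"
      by (rule integrable_const_bound[where B=B]) (use Fb rv in auto)
    have intG: "integrable M (G \<circ> RL)" using Gi by (simp add: comp_def)
    show ?thesis
      using indep_var_lebesgue_integral[OF iv intF intG] indep_var_integrable[OF iv intF intG]
      by (simp add: comp_def)
  qed
  define A where "A = (\<lambda>a b s. Amat m n nk \<tau> X (WK s) (WQ s) a b)"
  define FA where "FA = (\<lambda>a b x. Amat m n nk \<tau> X (\<lambda>i k. x (0::nat,i,k)) (\<lambda>i k. x (1::nat,i,k)) a b)"
  define GQ where "GQ = (\<lambda>a b y. Qf n X (\<lambda>i j. y (2::nat,i,j)) a b)"
  have FA_RK: "FA a b (RK s) = A a b s" for a b s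
    unfolding FA_def A_def RK_def
    by (rule fun_cong[OF fun_cong[OF Amat_cong]]) (auto simp: K_def KK_def gauss_entry_def)
  have GQ_RL: "GQ a b (RL s) = Qf n X (W s) a b" for a b s
    unfolding GQ_def RL_def
    by (rule fun_cong[OF fun_cong[OF Qf_cong]]) (auto simp: L_def LL_def gauss_entry_def)
  have FAm[measurable]: "FA a b \<in> borel_measurable (PiM K (\<lambda>_. borel))" for a b
    unfolding FA_def K_def by (rule meas_FA)
  have GQm[measurable]: "GQ a b \<in> borel_measurable (PiM L (\<lambda>_. borel))" for a b
    unfolding GQ_def L_def by (rule meas_Q)
  have FAb: "\<bar>FA a b x\<bar> \<le> 3" if "b < m" for a b x
    unfolding FA_def by (rule Amat_bound) (use that assms(2) in auto)
  define c where "c = 1 / (real n * sqrt (real n))"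
  have T2_eq: "T2 m n nk \<tau> X (WK s) (WQ s) (W s) a b =
      c * (\<Sum>\<nu><m. \<Sum>\<kappa><m. (A a \<nu> s * A b \<kappa> s) * Qf n X (W s) \<nu> \<kappa>)" for a b s
    unfolding T2_def Qf_def c_def A_def sum_distrib_left
    by (intro sum.cong refl) (simp only: mult_ac)
  have int1: "integrable M (\<lambda>s. (A a \<nu> s * A b \<kappa> s) * Qf n X (W s) \<nu> \<kappa>) \<and>
     (\<integral>s. (A a \<nu> s * A b \<kappa> s) * Qf n X (W s) \<nu> \<kappa> \<partial>M) =
     (\<integral>s. A a \<nu> s * A b \<kappa> s \<partial>M) * (real n * (\<Sum>i<n. X \<nu> i * X \<kappa> i))"
    if "\<nu> < m" "\<kappa> < m" for a b \<nu> \<kappa>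
  proof -
    have bd: "\<bar>FA a \<nu> x * FA b \<kappa> x\<bar> \<le> 3 * 3" for x
      unfolding abs_mult by (intro mult_mono FAb) (auto simp: that)
    have "integrable M (\<lambda>s. GQ \<nu> \<kappa> (RL s))"
      unfolding GQ_RL by (rule EQ(1)[OF P ind D])
    from fact[of "\<lambda>x. FA a \<nu> x * FA b \<kappa> x", OF _ bd GQm this]
    show ?thesis by (simp add: FA_RK GQ_RL EQ(2)[OF P ind D])
  qed
  have int2: "integrable M (\<lambda>s. (A a \<nu> s * A b \<kappa> s * A d \<nu>' s * A e \<kappa>' s) * (Qf n X (W s) \<nu> \<kappa> * Qf n X (W s) \<nu>' \<kappa>')) \<and>
     (\<integral>s. (A a \<nu> s * A b \<kappa> s * A d \<nu>' s * A e \<kappa>' s) * (Qf n X (W s) \<nu> \<kappa> * Qf n X (W s) \<nu>' \<kappa>') \<partial>M) =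
     (\<integral>s. A a \<nu> s * A b \<kappa> s * A d \<nu>' s * A e \<kappa>' s \<partial>M) *
     (real n * real n * (\<Sum>i<n. X \<nu> i * X \<kappa> i) * (\<Sum>i<n. X \<nu>' i * X \<kappa>' i)
   + real n * (\<Sum>i<n. X \<nu> i * X \<nu>' i) * (\<Sum>i<n. X \<kappa> i * X \<kappa>' i)
   + real n * (\<Sum>i<n. X \<nu> i * X \<kappa>' i) * (\<Sum>i<n. X \<kappa> i * X \<nu>' i))"
    if "\<nu> < m" "\<kappa> < m" "\<nu>' < m" "\<kappa>' < m" for a b d e \<nu> \<kappa> \<nu>' \<kappa>'
  proof -
    have bd: "\<bar>FA a \<nu> x * FA b \<kappa> x * FA d \<nu>' x * FA e \<kappa>' x\<bar> \<le> 3 * 3 * 3 * 3" for x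
      unfolding abs_mult by (intro mult_mono FAb) (auto simp: that)
    have "integrable M (\<lambda>s. GQ \<nu> \<kappa> (RL s) * GQ \<nu>' \<kappa>' (RL s))"
      unfolding GQ_RL by (rule EQQ(1)[OF P ind D])
    from fact[of "\<lambda>x. FA a \<nu> x * FA b \<kappa> x * FA d \<nu>' x * FA e \<kappa>' x", OF _ bd _ this]
    show ?thesis by (simp add: FA_RK GQ_RL EQQ(2)[OF P ind D])
  qed
  define Sx where "Sx a b = (\<Sum>i<n. X a i * X b i)" for a b
  have Vmat_Sx: "Vmat n X a b = Sx a b / real n" for a b unfolding Vmat_def Sx_def by simp
  have Sx_sym: "Sx a b = Sx b a" for a b unfolding Sx_def by (simp add: mult.commute)
  have sq: "sqrt (real n) * sqrt (real n) = real n" by simp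
  have sqp: "sqrt (real n) > 0" using assms(3) by simp
  have E1: "(\<integral>s. T2 m n nk \<tau> X (WK s) (WQ s) (W s) \<alpha> \<beta> \<partial>M)
           = sqrt (real n) * (\<Sum>\<nu><m. \<Sum>\<kappa><m. Vmat n X \<nu> \<kappa> *
               (\<integral>s. Amat m n nk \<tau> X (WK s) (WQ s) \<alpha> \<nu> * Amat m n nk \<tau> X (WK s) (WQ s) \<beta> \<kappa> \<partial>M))"
  proof -
    have "(\<integral>s. T2 m n nk \<tau> X (WK s) (WQ s) (W s) \<alpha> \<beta> \<partial>M) =
       c * (\<Sum>\<nu><m. \<Sum>\<kappa><m. \<integral>s. (A \<alpha> \<nu> s * A \<beta> \<kappa> s) * Qf n X (W s) \<nu> \<kappa> \<partial>M)"
      unfolding T2_eq by (subst integral_mult_right_zero, subst integral_sum2) (use int1 in auto)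
    also have "\<dots> = c * (\<Sum>\<nu><m. \<Sum>\<kappa><m. (\<integral>s. A \<alpha> \<nu> s * A \<beta> \<kappa> s \<partial>M) * (real n * (\<Sum>i<n. X \<nu> i * X \<kappa> i)))"
      using int1 by (auto intro!: sum.cong arg_cong[where f="\<lambda>x. c * x"])
    also have "\<dots> = sqrt (real n) * (\<Sum>\<nu><m. \<Sum>\<kappa><m. Vmat n X \<nu> \<kappa> *
               (\<integral>s. A \<alpha> \<nu> s * A \<beta> \<kappa> s \<partial>M))"
      unfolding c_def Vmat_Sx Sx_def[symmetric] sum_distrib_left
      apply (intro sum.cong refl)
      using assms(3) sqp by (simp add: field_simps sq)
    finally show ?thesis unfolding A_def .
  qed
  have E2: "(\<integral>s. T2 m n nk \<tau> X (WK s) (WQ s) (W s) \<alpha> \<beta> * T2 m n nk \<tau> X (WK s) (WQ s) (W s) \<delta> \<omega> \<partial>M)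
           = (\<Sum>\<nu><m. \<Sum>\<kappa><m. \<Sum>\<nu>'<m. \<Sum>\<kappa>'<m.
               (\<integral>s. Amat m n nk \<tau> X (WK s) (WQ s) \<alpha> \<nu> * Amat m n nk \<tau> X (WK s) (WQ s) \<beta> \<kappa>
                   * Amat m n nk \<tau> X (WK s) (WQ s) \<delta> \<nu>' * Amat m n nk \<tau> X (WK s) (WQ s) \<omega> \<kappa>' \<partial>M)
               * (real n * Vmat n X \<nu> \<kappa> * Vmat n X \<nu>' \<kappa>'
                  + Vmat n X \<nu> \<nu>' * Vmat n X \<kappa> \<kappa>' + Vmat n X \<nu> \<kappa>' * Vmat n X \<nu>' \<kappa>))"
  proof -
    have TT: "T2 m n nk \<tau> X (WK s) (WQ s) (W s) \<alpha> \<beta> * T2 m n nk \<tau> X (WK s) (WQ s) (W s) \<delta> \<omega> =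
      c * c * (\<Sum>\<nu><m. \<Sum>\<kappa><m. \<Sum>\<nu>'<m. \<Sum>\<kappa>'<m.
        (A \<alpha> \<nu> s * A \<beta> \<kappa> s * A \<delta> \<nu>' s * A \<omega> \<kappa>' s) * (Qf n X (W s) \<nu> \<kappa> * Qf n X (W s) \<nu>' \<kappa>'))" for s
    proof -
      have "T2 m n nk \<tau> X (WK s) (WQ s) (W s) \<alpha> \<beta> * T2 m n nk \<tau> X (WK s) (WQ s) (W s) \<delta> \<omega> =
        c * c * ((\<Sum>\<nu><m. \<Sum>\<kappa><m. (A \<alpha> \<nu> s * A \<beta> \<kappa> s) * Qf n X (W s) \<nu> \<kappa>) *
                 (\<Sum>\<nu><m. \<Sum>\<kappa><m. (A \<delta> \<nu> s * A \<omega> \<kappa> s) * Qf n X (W s) \<nu> \<kappa>))"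
        unfolding T2_eq by (simp only: mult_ac)
      also have "\<dots> = c * c * (\<Sum>\<nu><m. \<Sum>\<kappa><m. \<Sum>\<nu>'<m. \<Sum>\<kappa>'<m.
        (A \<alpha> \<nu> s * A \<beta> \<kappa> s * A \<delta> \<nu>' s * A \<omega> \<kappa>' s) * (Qf n X (W s) \<nu> \<kappa> * Qf n X (W s) \<nu>' \<kappa>'))"
        apply (rule arg_cong[where f="\<lambda>x. c * c * x"])
        unfolding sum_distrib_right unfolding sum_distrib_left
        by (intro sum.cong refl) (simp only: mult_ac)
      finally show ?thesis .
    qed
    have "(\<integral>s. T2 m n nk \<tau> X (WK s) (WQ s) (W s) \<alpha> \<beta> * T2 m n nk \<tau> X (WK s) (WQ s) (W s) \<delta> \<omega> \<partial>M) =
      c * c * (\<Sum>\<nu><m. \<Sum>\<kappa><m. \<Sum>\<nu>'<m. \<Sum>\<kappa>'<m.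
        \<integral>s. (A \<alpha> \<nu> s * A \<beta> \<kappa> s * A \<delta> \<nu>' s * A \<omega> \<kappa>' s) * (Qf n X (W s) \<nu> \<kappa> * Qf n X (W s) \<nu>' \<kappa>') \<partial>M)"
      unfolding TT by (subst integral_mult_right_zero, subst integral_sum4) (use int2 in auto)
    also have "\<dots> = c * c * (\<Sum>\<nu><m. \<Sum>\<kappa><m. \<Sum>\<nu>'<m. \<Sum>\<kappa>'<m.
        (\<integral>s. A \<alpha> \<nu> s * A \<beta> \<kappa> s * A \<delta> \<nu>' s * A \<omega> \<kappa>' s \<partial>M) *
     (real n * real n * (\<Sum>i<n. X \<nu> i * X \<kappa> i) * (\<Sum>i<n. X \<nu>' i * X \<kappa>' i)
   + real n * (\<Sum>i<n. X \<nu> i * X \<nu>' i) * (\<Sum>i<n. X \<kappa> i * X \<kappa>' i)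
   + real n * (\<Sum>i<n. X \<nu> i * X \<kappa>' i) * (\<Sum>i<n. X \<kappa> i * X \<nu>' i)))"
      using int2 by (auto intro!: sum.cong arg_cong[where f="\<lambda>x. c * c * x"])
    also have "\<dots> = (\<Sum>\<nu><m. \<Sum>\<kappa><m. \<Sum>\<nu>'<m. \<Sum>\<kappa>'<m.
               (\<integral>s. A \<alpha> \<nu> s * A \<beta> \<kappa> s * A \<delta> \<nu>' s * A \<omega> \<kappa>' s \<partial>M)
               * (real n * Vmat n X \<nu> \<kappa> * Vmat n X \<nu>' \<kappa>'
                  + Vmat n X \<nu> \<nu>' * Vmat n X \<kappa> \<kappa>' + Vmat n X \<nu> \<kappa>' * Vmat n X \<nu>' \<kappa>))"
      unfolding c_def Vmat_Sx Sx_def[symmetric] sum_distrib_left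
      apply (intro sum.cong refl)
      using assms(3) sqp by (simp add: field_simps sq Sx_sym)
    finally show ?thesis unfolding A_def .
  qed
  show ?thesis using E1 E2 by blast
qed

end
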